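(* Let $n\geq 3$ and let $P=[p_{ij}]$ be the $n\times n$ symmetric matrix with $p_{ii}=x_i\geq 0$ ($1\le i\le n$), $p_{i,i+2}=p_{i+2,i}=y_i\geq 0$ ($1\le i\le n-2$), and all other entries equal to $0$. Then $P$ is infinitely divisible if and only if $P$ is positive semidefinite and neither of the sequences $(y_2,y_4,y_6,\ldots)$ and $(y_1,y_3,y_5,\ldots)$ (indices at most $n-2$) has two consecutive positive entries. In particular, for $n=3$ and $n=4$, $P$ is infinitely divisible if and only if $P$ is positive semidefinite.
   Context: For a nonnegative matrix $A=[a_{ij}]$ and $r>0$, $A^{\circ r}=[a_{ij}^r]$. A nonnegative symmetric matrix $A$ is infinitely divisible if $A^{\circ r}$ is positive semidefinite for every $r>0$. *)

theory Defs
  imports Complex_Main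
begin

text \<open>Real n x n matrices are represented as functions nat => nat => real,
  indexed by 1..n (entries outside this range are irrelevant).\<close>

definition psd :: "nat \<Rightarrow> (nat \<Rightarrow> nat \<Rightarrow> real) \<Rightarrow> bool" where
  "psd n A \<longleftrightarrow> (\<forall>i\<in>{1..n}. \<forall>j\<in>{1..n}. A i j = A j i) \<and>
     (\<forall>v :: nat \<Rightarrow> real. (\<Sum>i=1..n. \<Sum>j=1..n. v i * A i j * v j) \<ge> 0)"

definition hadamard_pow :: "(nat \<Rightarrow> nat \<Rightarrow> real) \<Rightarrow> real \<Rightarrow> (nat \<Rightarrow> nat \<Rightarrow> real)" where
  "hadamard_pow A r = (\<lambda>i j. A i j powr r)"

definition infinitely_divisible :: "nat \<Rightarrow> (nat \<Rightarrow> nat \<Rightarrow> real) \<Rightarrow> bool" where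
  "infinitely_divisible n A \<longleftrightarrow>
     (\<forall>i\<in>{1..n}. \<forall>j\<in>{1..n}. A i j \<ge> 0 \<and> A i j = A j i) \<and>
     (\<forall>r>0. psd n (hadamard_pow A r))"

definition pmat :: "(nat \<Rightarrow> real) \<Rightarrow> (nat \<Rightarrow> real) \<Rightarrow> nat \<Rightarrow> nat \<Rightarrow> real" where
  "pmat x y i j = (if i = j then x i else if j = i + 2 then y i else if i = j + 2 then y j else 0)"

end

theory Submission
  imports Defs
begin

definition qf :: "nat \<Rightarrow> (nat\<Rightarrow>real) \<Rightarrow> (nat\<Rightarrow>real) \<Rightarrow> (nat\<Rightarrow>real) \<Rightarrow> real" where
 "qf n x y v = (\<Sum>j=1..n. x j * (v j)^2) + 2 * (\<Sum>i=1..n-2. y i * v i * v (i+2))"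

lemma shift_sum: "(\<Sum>i=1..(n::nat). if Suc (Suc i) \<le> n then g i else 0) = (\<Sum>i=1..n-2. (g i::real))"
proof -
  have "{1..n-2} = {i\<in>{1..n}. Suc (Suc i) \<le> n}" by auto
  then show ?thesis using sum.inter_filter[of "{1..n}" g "\<lambda>i. Suc (Suc i) \<le> n"] by simp
qed

lemma qform: "(\<Sum>i=1..n. \<Sum>j=1..n. v i * pmat x y i j * v j) = qf n x y v"
proof -
  have e: "v i * pmat x y i j * v j = (if j = i then x i * (v i)^2 else 0) + (if j = i+2 then y i * v i * v j else 0)
     + (if i = j+2 then y j * v j * v i else 0)" for i j
    by (auto simp: pmat_def power2_eq_square)
  have t1: "(\<Sum>i=1..n. \<Sum>j=1..n. (if j = i then x i * (v i)^2 else 0)) = (\<Sum>j=1..n. x j * (v j)^2)"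
    by (simp add: sum.delta')
  have t2: "(\<Sum>i=1..n. \<Sum>j=1..n. (if j = i+2 then y i * v i * v j else 0)) = (\<Sum>i=1..n-2. y i * v i * v (i+2))"
    using shift_sum[of n "\<lambda>i. y i * v i * v (Suc (Suc i))"] by (simp add: sum.delta')
  have t3: "(\<Sum>i=1..n. \<Sum>j=1..n. (if i = j+2 then y j * v j * v i else 0)) = (\<Sum>i=1..n-2. y i * v i * v (i+2))"
    apply (subst sum.swap)
    using shift_sum[of n "\<lambda>i. y i * v i * v (Suc (Suc i))"] by (simp add: sum.delta mult_ac)
  show ?thesis
    unfolding e sum.distrib t1 t2 t3 qf_def by simp
qed


lemma pmat_powr: "hadamard_pow (pmat x y) r = pmat (\<lambda>i. x i powr r) (\<lambda>i. y i powr r)"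
  by (auto simp: hadamard_pow_def pmat_def fun_eq_iff)

lemma psd_pmat: "psd n (pmat x y) \<longleftrightarrow> (\<forall>v. qf n x y v \<ge> 0)"
proof -
  have "pmat x y i j = pmat x y j i" for i j by (auto simp: pmat_def)
  then show ?thesis unfolding psd_def qform by auto
qed

lemma qf_cong: "(\<forall>i\<in>{1..n}. x i = x' i) \<Longrightarrow> (\<forall>i\<in>{1..n-2}. y i = y' i) \<Longrightarrow> qf n x y v = qf n x' y' v"
  unfolding qf_def by (metis (no_types, lifting) sum.cong)

lemma qf2:
  assumes "i \<in> {1..n-2}"
  shows "qf n x y (\<lambda>k. if k = i then a else if k = i+2 then b else 0) = x i * a^2 + x (i+2) * b^2 + 2 * y i * a * b"
proof -
  let ?v = "\<lambda>k. if k = i then a else if k = i+2 then b else (0::real)"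
  have 1: "x k * (?v k)^2 = (if k = i then x i * a^2 else 0) + (if k = i+2 then x (i+2) * b^2 else 0)" for k
    by auto
  have 2: "y k * ?v k * ?v (k+2) = (if k = i then y i * a * b else 0)" for k
    by auto
  have "i \<in> {1..n}" "i+2 \<in> {1..n}" using assms by auto
  then show ?thesis unfolding qf_def 1 2 sum.distrib using assms by (simp add: sum.delta)
qed

lemma qf3:
  assumes "1 \<le> i" "i + 4 \<le> n"
  shows "qf n x y (\<lambda>k. if k = i then 1 else if k = i+2 then -1 else if k = i+4 then 1 else 0)
     = x i + x (i+2) + x (i+4) - 2 * y i - 2 * y (i+2)"
proof -
  let ?v = "\<lambda>k. if k = i then 1 else if k = i+2 then -1 else if k = i+4 then 1 else (0::real)"
  have 1: "x k * (?v k)^2 = (if k = i then x i else 0) + (if k = i+2 then x (i+2) else 0) + (if k = i+4 then x (i+4) else 0)" for k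
    by auto
  have 2: "y k * ?v k * ?v (k+2) = (if k = i then - y i else 0) + (if k = i+2 then - y (i+2) else 0)" for k
    by auto
  have "i \<in> {1..n}" "i+2 \<in> {1..n}" "i+4 \<in> {1..n}" "i \<in> {1..n-2}" "i+2 \<in> {1..n-2}" using assms by auto
  then show ?thesis unfolding qf_def 1 2 sum.distrib by (simp add: sum.delta)
qed

lemma two_by_two:
  fixes X Y Z a b :: real
  assumes "X \<ge> 0" "Z \<ge> 0" "Y^2 \<le> X * Z"
  shows "- (X * a^2 + Z * b^2) \<le> 2 * Y * a * b"
proof (cases "X = 0")
  case True
  then have "Y = 0" using assms by simp
  then show ?thesis using assms True by simp
next
  case False
  then have Xp: "X > 0" using assms by simp
  have "X * (X * a^2 + Z * b^2 + 2 * Y * a * b) = (X*a + Y*b)^2 + (X*Z - Y^2) * b^2"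
    by (simp add: algebra_simps power2_eq_square)
  also have "\<dots> \<ge> 0" using assms by simp
  finally have "0 \<le> X * (X * a^2 + Z * b^2 + 2 * Y * a * b)" .
  then have "0 \<le> X * a^2 + Z * b^2 + 2 * Y * a * b" using Xp by (simp add: zero_le_mult_iff)
  then show ?thesis by simp
qed

lemma two_by_two_conv:
  fixes X Y Z :: real
  assumes "X \<ge> 0" "Y \<ge> 0" "\<And>a b. 0 \<le> X * a^2 + Z * b^2 + 2 * Y * a * b"
  shows "Y^2 \<le> X * Z"
proof (cases "X = 0")
  case True
  show ?thesis
  proof (cases "Y = 0")
    case True then show ?thesis using \<open>X = 0\<close> by simp
  next
    case False
    then have Yp: "Y > 0" using assms by simp
    have "0 \<le> X * (-(Z+1)/(2*Y))^2 + Z * 1^2 + 2 * Y * (-(Z+1)/(2*Y)) * 1" by (rule assms(3))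
    also have "\<dots> = -1" using True Yp by (simp add: field_simps)
    finally show ?thesis by simp
  qed
next
  case False
  then have Xp: "X > 0" using assms by simp
  have "0 \<le> X * (-Y)^2 + Z * X^2 + 2 * Y * (-Y) * X" by (rule assms(3))
  also have "\<dots> = X * (X * Z - Y^2)" by (simp add: algebra_simps power2_eq_square)
  finally show ?thesis using Xp by (simp add: zero_le_mult_iff)
qed

lemma main_ineq:
  fixes X Y :: "nat \<Rightarrow> real"
  assumes X0: "\<forall>j\<in>{1..n}. X j \<ge> 0"
    and Y0: "\<forall>i\<in>{1..n-2}. Y i \<ge> 0"
    and XY: "\<forall>i\<in>{1..n-2}. (Y i)^2 \<le> X i * X (i+2)"
    and nc: "\<not> (\<exists>i. 1 \<le> i \<and> i + 2 \<le> n - 2 \<and> Y i > 0 \<and> Y (i + 2) > 0)"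
  shows "qf n X Y v \<ge> 0"
proof -
  define S where "S = {1..n-2}"
  define E where "E = {i\<in>S. Y i > 0}"
  define f where "f j = X j * (v j)^2" for j
  have fE: "finite E" unfolding E_def S_def by auto
  have ES: "E \<subseteq> S" unfolding E_def by auto
  have s1: "(\<Sum>i\<in>S. Y i * v i * v (i+2)) = (\<Sum>i\<in>E. Y i * v i * v (i+2))"
  proof (rule sum.mono_neutral_right)
    show "finite S" unfolding S_def by auto
    show "E \<subseteq> S" by (rule ES)
    show "\<forall>i\<in>S - E. Y i * v i * v (i + 2) = 0"
      using Y0 unfolding E_def S_def by force
  qed
  have s2: "(\<Sum>i\<in>E. 2 * Y i * v i * v (i+2)) \<ge> (\<Sum>i\<in>E. - (f i + f (i+2)))"
  proof (rule sum_mono)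
    fix i assume "i \<in> E"
    then have "i \<in> {1..n}" "i+2 \<in> {1..n}" "i \<in> {1..n-2}" unfolding E_def S_def by auto
    then show "- (f i + f (i+2)) \<le> 2 * Y i * v i * v (i+2)"
      unfolding f_def using two_by_two[of "X i" "X (i+2)" "Y i" "v i" "v (i+2)"] X0 XY by auto
  qed
  have inj: "inj_on (\<lambda>i. i+2) E" by (auto simp: inj_on_def)
  have s3: "(\<Sum>i\<in>E. f (i+2)) = (\<Sum>j\<in>(\<lambda>i. i+2) ` E. f j)"
    using sum.reindex[OF inj, of f] by simp
  have disj: "E \<inter> (\<lambda>i. i+2) ` E = {}"
  proof (rule ccontr)
    assume "E \<inter> (\<lambda>i. i+2) ` E \<noteq> {}"
    then obtain k where "k \<in> E" "k+2 \<in> E" by auto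
    then show False using nc unfolding E_def S_def by auto
  qed
  have sub: "E \<union> (\<lambda>i. i+2) ` E \<subseteq> {1..n}" unfolding E_def S_def by auto
  have "(\<Sum>i\<in>E. f i + f (i+2)) = (\<Sum>j\<in>E \<union> (\<lambda>i. i+2) ` E. f j)"
    using sum.union_disjoint[OF fE _ disj, of f] fE s3 by (simp add: sum.distrib)
  also have "\<dots> \<le> (\<Sum>j=1..n. f j)"
    by (rule sum_mono2) (use sub X0 in \<open>auto simp: f_def\<close>)
  finally have s4: "(\<Sum>i\<in>E. f i + f (i+2)) \<le> (\<Sum>j=1..n. f j)" .
  have "qf n X Y v = (\<Sum>j=1..n. f j) + (\<Sum>i\<in>E. 2 * Y i * v i * v (i+2))"
    unfolding qf_def f_def S_def[symmetric] s1 by (simp add: sum_distrib_left mult.assoc)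
  also have "\<dots> \<ge> (\<Sum>j=1..n. f j) - (\<Sum>i\<in>E. f i + f (i+2))"
    using s2 sum_negf[of "\<lambda>i. f i + f (i+2)" E] by simp
  finally show ?thesis using s4 by linarith
qed


lemma powr_sq_le:
  fixes a b c r :: real
  assumes "a \<ge> 0" "b \<ge> 0" "c \<ge> 0" "r > 0" "b^2 \<le> a * c"
  shows "(b powr r)^2 \<le> a powr r * c powr r"
proof -
  have "(b powr r)^2 = (b^2) powr r" using assms by (simp add: power2_eq_square powr_mult)
  also have "\<dots> \<le> (a * c) powr r" using assms by (intro powr_mono2) auto
  also have "\<dots> = a powr r * c powr r" using assms by (simp add: powr_mult)
  finally show ?thesis .
qed

theorem corollary2p6:
  fixes n :: nat and x y :: "nat \<Rightarrow> real"
  assumes "n \<ge> 3"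
    and "\<forall>i\<in>{1..n}. x i \<ge> 0"
    and "\<forall>i\<in>{1..n-2}. y i \<ge> 0"
  shows "(infinitely_divisible n (pmat x y) \<longleftrightarrow>
           psd n (pmat x y) \<and>
           \<not> (\<exists>i. 1 \<le> i \<and> i + 2 \<le> n - 2 \<and> y i > 0 \<and> y (i + 2) > 0))
         \<and> ((n = 3 \<or> n = 4) \<longrightarrow> (infinitely_divisible n (pmat x y) \<longleftrightarrow> psd n (pmat x y)))"
proof -
  note x0 = assms(2) and y0 = assms(3)
  have XYpsd: "\<forall>i\<in>{1..n-2}. (y i)^2 \<le> x i * x (i+2)" if P: "psd n (pmat x y)"
  proof
    fix i assume i: "i \<in> {1..n-2}"
    show "(y i)^2 \<le> x i * x (i+2)"
    proof (rule two_by_two_conv)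
      show "0 \<le> x i" using x0 i by auto
      show "0 \<le> y i" using y0 i by auto
      fix a b
      show "0 \<le> x i * a^2 + x (i+2) * b^2 + 2 * y i * a * b"
        using P qf2[OF i, of x y a b] unfolding psd_pmat by metis
    qed
  qed
  have main: "infinitely_divisible n (pmat x y) \<longleftrightarrow>
           psd n (pmat x y) \<and>
           \<not> (\<exists>i. 1 \<le> i \<and> i + 2 \<le> n - 2 \<and> y i > 0 \<and> y (i + 2) > 0)"
  proof
    assume ID: "infinitely_divisible n (pmat x y)"
    then have "psd n (hadamard_pow (pmat x y) 1)" unfolding infinitely_divisible_def by auto
    then have "\<forall>v. qf n (\<lambda>i. x i powr 1) (\<lambda>i. y i powr 1) v \<ge> 0" unfolding pmat_powr psd_pmat .
    moreover have "qf n (\<lambda>i. x i powr 1) (\<lambda>i. y i powr 1) v = qf n x y v" for v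
      by (rule qf_cong) (use x0 y0 in auto)
    ultimately have P: "psd n (pmat x y)" unfolding psd_pmat by simp
    have nc: "\<not> (\<exists>i. 1 \<le> i \<and> i + 2 \<le> n - 2 \<and> y i > 0 \<and> y (i + 2) > 0)"
    proof
      assume "\<exists>i. 1 \<le> i \<and> i + 2 \<le> n - 2 \<and> y i > 0 \<and> y (i + 2) > 0"
      then obtain i where i: "1 \<le> i" "i + 2 \<le> n - 2" "y i > 0" "y (i+2) > 0" by blast
      have i1: "i \<in> {1..n-2}" and i2: "i+2 \<in> {1..n-2}" using i by auto
      have h1: "(y i)^2 \<le> x i * x (i+2)" using XYpsd[OF P] i1 by auto
      have h2: "(y (i+2))^2 \<le> x (i+2) * x (i+4)" proof -
        have e: "i + 2 + 2 = i + 4" by simp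
        show ?thesis using bspec[OF XYpsd[OF P] i2] unfolding e .
      qed
      have xx: "x i \<ge> 0" "x (i+2) \<ge> 0" "x (i+4) \<ge> 0" using x0 i by auto
      have p1: "x i * x (i+2) > 0" using h1 i(3) by (smt (verit) zero_less_power)
      have p2: "x (i+2) * x (i+4) > 0" using h2 i(4) by (smt (verit) zero_less_power)
      have xp: "x i > 0" "x (i+2) > 0" "x (i+4) > 0" using p1 p2 xx
        by (auto simp: zero_less_mult_iff)
      define g where "g r = x i powr r + x (i+2) powr r + x (i+4) powr r - 2 * y i powr r - 2 * y (i+2) powr r" for r :: real
      have "(g \<longlongrightarrow> x i powr 0 + x (i+2) powr 0 + x (i+4) powr 0 - 2 * y i powr 0 - 2 * y (i+2) powr 0) (at_right 0)"
        unfolding g_def using xp i by (intro tendsto_intros) auto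
      then have "(g \<longlongrightarrow> -1) (at_right 0)" using xp i by simp
      then have "eventually (\<lambda>r. g r < 0) (at_right 0)" by (rule order_tendstoD) simp
      moreover have "eventually (\<lambda>r::real. r > 0) (at_right 0)" by (simp add: eventually_at_right_less)
      ultimately have "eventually (\<lambda>r. r > 0 \<and> g r < 0) (at_right 0)" by (simp add: eventually_conj_iff)
      then have "\<exists>r. r > 0 \<and> g r < 0" by (rule eventually_happens'[OF trivial_limit_at_right_real])
      then obtain r where r: "r > 0" "g r < 0" by blast
      have "psd n (hadamard_pow (pmat x y) r)" using ID r unfolding infinitely_divisible_def by auto
      then have "\<forall>v. qf n (\<lambda>i. x i powr r) (\<lambda>i. y i powr r) v \<ge> 0" unfolding pmat_powr psd_pmat .
      moreover have "i + 4 \<le> n" using i by auto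
      ultimately have "0 \<le> g r" unfolding g_def using qf3[OF i(1), of n "\<lambda>i. x i powr r" "\<lambda>i. y i powr r"] by (metis (no_types, lifting))
      then show False using r by simp
    qed
    show "psd n (pmat x y) \<and> \<not> (\<exists>i. 1 \<le> i \<and> i + 2 \<le> n - 2 \<and> y i > 0 \<and> y (i + 2) > 0)"
      using P nc by blast
  next
    assume A: "psd n (pmat x y) \<and> \<not> (\<exists>i. 1 \<le> i \<and> i + 2 \<le> n - 2 \<and> y i > 0 \<and> y (i + 2) > 0)"
    have XY: "\<forall>i\<in>{1..n-2}. (y i)^2 \<le> x i * x (i+2)" using XYpsd A by blast
    have ent: "\<forall>i\<in>{1..n}. \<forall>j\<in>{1..n}. pmat x y i j \<ge> 0 \<and> pmat x y i j = pmat x y j i"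
      using x0 y0 by (auto simp: pmat_def)
    have "psd n (hadamard_pow (pmat x y) r)" if r: "r > 0" for r
      unfolding pmat_powr psd_pmat
    proof
      fix v
      show "0 \<le> qf n (\<lambda>i. x i powr r) (\<lambda>i. y i powr r) v"
      proof (rule main_ineq)
        show "\<forall>j\<in>{1..n}. 0 \<le> x j powr r" by simp
        show "\<forall>i\<in>{1..n - 2}. 0 \<le> y i powr r" by simp
        show "\<forall>i\<in>{1..n - 2}. (y i powr r)\<^sup>2 \<le> x i powr r * x (i + 2) powr r"
        proof
          fix i assume i: "i \<in> {1..n-2}"
          then show "(y i powr r)\<^sup>2 \<le> x i powr r * x (i + 2) powr r"
            using powr_sq_le[of "x i" "y i" "x (i+2)" r] x0 y0 XY r by auto
        qed
        show "\<not> (\<exists>i. 1 \<le> i \<and> i + 2 \<le> n - 2 \<and> 0 < y i powr r \<and> 0 < y (i + 2) powr r)"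
        proof
          assume "\<exists>i. 1 \<le> i \<and> i + 2 \<le> n - 2 \<and> 0 < y i powr r \<and> 0 < y (i + 2) powr r"
          then obtain i where i: "1 \<le> i" "i + 2 \<le> n - 2" "0 < y i powr r" "0 < y (i + 2) powr r" by blast
          have "y i \<ge> 0" "y (i+2) \<ge> 0" using y0 i by auto
          moreover have "y i \<noteq> 0" "y (i+2) \<noteq> 0" using i(3,4) by auto
          ultimately have "y i > 0" "y (i+2) > 0" by auto
          then show False using A i(1,2) by blast
        qed
      qed
    qed
    then show "infinitely_divisible n (pmat x y)" unfolding infinitely_divisible_def using ent by auto
  qed
  show ?thesis using main by auto
qed

end
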